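(* Let $x_*\in\operatorname{int}A$ be a feasible point of problem $(\mathcal{P})$ such that $\Lambda(x_* )\ne\emptyset$ and for every $h\in C(x_* )\setminus\{0\}$ there exist $\lambda\in\Lambda(x_* )$ and $\alpha\in\alpha(x_*,\lambda)$ with $\langle h,\nabla^2_{xx}\mathcal{L}(x_*,\lambda,\alpha)h\rangle>0$. Then $x_*$ is a locally optimal solution of $(\mathcal{P})$ at which the second order growth condition holds.
   Context: Setting: $A\subseteq\mathbb{R}^d$ nonempty closed convex; $Y$ real Banach space with dual $Y^*$ and pairing $\langle\cdot,\cdot\rangle$; $K\subset Y$ nonempty closed convex cone; $W$ compact Hausdorff; $f:\mathbb{R}^d\times W\to\mathbb{R}$ differentiable in $x$ with $f,\nabla_xf$ jointly continuous; $G:\mathbb{R}^d\to Y$ continuously Fréchet differentiable; additionally $G$ is twice continuously Fréchet differentiable near $x_*$, $f(\cdot,\omega)$ is twice differentiable on a neighbourhood $\mathcal{O}(x_* )$ for every $\omega$, and $\nabla^2_{xx}f$ is continuous on $\mathcal{O}(x_* )\times W$. $F(x)=\max_\omega f(x,\omega)$, $W(x)=\{\omega:f(x,\omega)=F(x)\}$; $(\mathcal{P})$: minimise $F$ s.t. $G(x)\in K$, $x\in A$; feasible set $\Omega$. Contingent cone $T_C(y)$: $h$ with $\alpha_n\downarrow0$, $h_n\to h$, $y+\alpha_nh_n\in C$. $K^*=\{y^*:\langle y^*,y\rangle\le0\ \forall y\in K\}$. $\Lambda(x_* )$: set of $\lambda\in K^*$ with $\langle\lambda,G(x_* )\rangle=0$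 and $[F+\langle\lambda,G\rangle]'(x_*,h)\ge0$ for all $h\in T_A(x_* )$. $\alpha(x_*,\lambda)$: set of nonnegative regular Borel measures $\alpha$ on $W$ with $\operatorname{supp}\alpha\subseteq W(x_* )$, $\alpha(W)=1$, and $\langle\int_W\nabla_xf(x_*,\omega)d\alpha,h\rangle+\langle\lambda,DG(x_* )h\rangle\ge0$ for all $h\in T_A(x_* )$. $\langle h,\nabla^2_{xx}\mathcal{L}(x,\lambda,\alpha)h\rangle=\int_W\langle h,\nabla^2_{xx}f(x,\omega)h\rangle d\alpha(\omega)+\langle\lambda,D^2G(x)(h,h)\rangle$. Critical cone $C(x_* )=\{h\in T_A(x_* ):DG(x_* )h\in T_K(G(x_* )),\ \max_{\omega\in W(x_* )}\langle\nabla_xf(x_*,\omega),h\rangle\le0\}$. Second order growth at $x_*$: $\exists\rho>0$ and a neighbourhood $\mathcal{O}$ with $F(x)\ge F(x_* )+\rho|x-x_*|^2$ for all $x\in\mathcal{O}\cap\Omega$. *)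

theory Defs
  imports "HOL-Analysis.Analysis"
begin

definition contingent_cone :: "'a::real_normed_vector set \<Rightarrow> 'a \<Rightarrow> 'a set" where
  "contingent_cone C y = {h. \<exists>(\<alpha>::nat \<Rightarrow> real) (hn::nat \<Rightarrow> 'a).
      (\<forall>n. \<alpha> n > 0) \<and> decseq \<alpha> \<and> \<alpha> \<longlonglongrightarrow> 0 \<and> hn \<longlonglongrightarrow> h \<and> (\<forall>n. y + \<alpha> n *\<^sub>R hn n \<in> C)}"

definition polar_cone :: "'y::real_normed_vector set \<Rightarrow> ('y \<Rightarrow>\<^sub>L real) set" where
  "polar_cone K = {ys. \<forall>y\<in>K. blinfun_apply ys y \<le> 0}"

definition maxfun :: "('a \<Rightarrow> 'w \<Rightarrow> real) \<Rightarrow> 'a \<Rightarrow> real" where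
  "maxfun f x = Sup (range (f x))"

definition active_set :: "('a \<Rightarrow> 'w \<Rightarrow> real) \<Rightarrow> 'a \<Rightarrow> 'w set" where
  "active_set f x = {\<omega>. f x \<omega> = maxfun f x}"

definition feasible_set :: "'a set \<Rightarrow> 'y set \<Rightarrow> ('a \<Rightarrow> 'y) \<Rightarrow> 'a set" where
  "feasible_set A K G = {x\<in>A. G x \<in> K}"

definition multipliers ::
  "'a::real_normed_vector set \<Rightarrow> 'y::real_normed_vector set \<Rightarrow> ('a \<Rightarrow> 'y) \<Rightarrow> ('a \<Rightarrow> 'w \<Rightarrow> real)
     \<Rightarrow> 'a \<Rightarrow> ('y \<Rightarrow>\<^sub>L real) set" where
  "multipliers A K G f x = {l \<in> polar_cone K. blinfun_apply l (G x) = 0 \<and>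
     (\<forall>h \<in> contingent_cone A x. \<exists>L. L \<ge> 0 \<and>
        ((\<lambda>t. ((maxfun f (x + t *\<^sub>R h) + blinfun_apply l (G (x + t *\<^sub>R h)))
               - (maxfun f x + blinfun_apply l (G x))) / t) \<longlongrightarrow> L) (at_right 0))}"

definition regular_borel_measure :: "'w::topological_space measure \<Rightarrow> bool" where
  "regular_borel_measure M \<longleftrightarrow> sets M = sets borel \<and>
     (\<forall>B\<in>sets M. emeasure M B = (INF U\<in>{U. open U \<and> B \<subseteq> U}. emeasure M U) \<and>
                  emeasure M B = (SUP C\<in>{C. compact C \<and> C \<subseteq> B}. emeasure M C))"

definition measure_support :: "'w::topological_space measure \<Rightarrow> 'w set" where
  "measure_support M = {\<omega>. \<forall>U. open U \<and> \<omega> \<in> U \<longrightarrow> emeasure M U > 0}"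

text \<open>The set alpha(x,lambda); fx is the gradient of f in x, DG the derivative of G.\<close>
definition alpha_set ::
  "'a::euclidean_space set \<Rightarrow> ('a \<Rightarrow> ('a \<Rightarrow>\<^sub>L 'y::real_normed_vector)) \<Rightarrow> ('a \<Rightarrow> 'w::topological_space \<Rightarrow> real)
     \<Rightarrow> ('a \<Rightarrow> 'w \<Rightarrow> 'a) \<Rightarrow> 'a \<Rightarrow> ('y \<Rightarrow>\<^sub>L real) \<Rightarrow> 'w measure set" where
  "alpha_set A DG f fx x l = {M. regular_borel_measure M \<and> measure_support M \<subseteq> active_set f x \<and>
      emeasure M (space M) = 1 \<and>
      (\<forall>h \<in> contingent_cone A x. (LINT \<omega>|M. fx x \<omega>) \<bullet> h + blinfun_apply l (blinfun_apply (DG x) h) \<ge> 0)}"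

text \<open><h, Hess_xx L(x,lambda,alpha) h>; fxx x w is the Hessian of f(.,w) at x, D2G the
  second derivative of G.\<close>
definition lagrangian_hess_form ::
  "('a::euclidean_space \<Rightarrow> 'w::topological_space \<Rightarrow> ('a \<Rightarrow>\<^sub>L 'a)) \<Rightarrow> ('a \<Rightarrow> ('a \<Rightarrow>\<^sub>L ('a \<Rightarrow>\<^sub>L 'y::real_normed_vector)))
     \<Rightarrow> 'a \<Rightarrow> ('y \<Rightarrow>\<^sub>L real) \<Rightarrow> 'w measure \<Rightarrow> 'a \<Rightarrow> real" where
  "lagrangian_hess_form fxx D2G x l M h =
     (LINT \<omega>|M. h \<bullet> blinfun_apply (fxx x \<omega>) h) + blinfun_apply l (blinfun_apply (blinfun_apply (D2G x) h) h)"

definition critical_cone ::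
  "'a::euclidean_space set \<Rightarrow> 'y::real_normed_vector set \<Rightarrow> ('a \<Rightarrow> 'y) \<Rightarrow> ('a \<Rightarrow> ('a \<Rightarrow>\<^sub>L 'y))
     \<Rightarrow> ('a \<Rightarrow> 'w \<Rightarrow> real) \<Rightarrow> ('a \<Rightarrow> 'w \<Rightarrow> 'a) \<Rightarrow> 'a \<Rightarrow> 'a set" where
  "critical_cone A K G DG f fx x = {h \<in> contingent_cone A x.
      blinfun_apply (DG x) h \<in> contingent_cone K (G x) \<and>
      Sup ((\<lambda>\<omega>. fx x \<omega> \<bullet> h) ` active_set f x) \<le> 0}"

end

theory Submission
  imports Defs
begin


lemma contingent_interior:
  fixes A :: "'a::real_normed_vector set"
  assumes "xs \<in> interior A"
  shows "h \<in> contingent_cone A xs"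
proof -
  obtain r where r: "r > 0" "ball xs r \<subseteq> A"
    using assms by (meson mem_interior)
  define a where "a = (\<lambda>n::nat. r / (2 * (norm h + 1) * (real n + 1)))"
  have pos: "\<forall>n. a n > 0" using r unfolding a_def by (intro allI divide_pos_pos mult_pos_pos) (auto intro: add_nonneg_pos)
  have "a n \<le> a m" if "m \<le> n" for m n unfolding a_def using r that
    by (intro divide_left_mono mult_left_mono mult_pos_pos) (auto intro: add_nonneg_pos)
  then have dec: "decseq a" unfolding decseq_def by blast
  have "(\<lambda>n. (r / (2 * (norm h + 1))) * inverse (real n + 1)) \<longlonglongrightarrow> (r / (2 * (norm h + 1))) * 0"
    by (intro tendsto_mult tendsto_const) (use LIMSEQ_inverse_real_of_nat in \<open>simp add: add.commute\<close>)
  then have lim: "a \<longlonglongrightarrow> 0" by (simp add: a_def field_simps)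
  have "xs + a n *\<^sub>R h \<in> A" for n
  proof -
    have hp: "norm h + 1 > 0" by (simp add: add_nonneg_pos)
    have "norm (a n *\<^sub>R h) = a n * norm h" using pos by (simp add: less_imp_le)
    also have "\<dots> \<le> a n * (norm h + 1)" using pos by (intro mult_left_mono) (auto simp: less_imp_le)
    also have "\<dots> = r / (2 * (real n + 1))" unfolding a_def using hp by (simp add: divide_simps) (simp add: algebra_simps)
    also have "\<dots> \<le> r / 2" using r by (intro divide_left_mono) auto
    also have "\<dots> < r" using r by simp
    finally have "xs + a n *\<^sub>R h \<in> ball xs r" by (simp add: dist_norm)
    then show ?thesis using r(2) by blast
  qed
  then show ?thesis unfolding contingent_cone_def using pos dec lim
    by (intro CollectI exI[of _ a] exI[of _ "\<lambda>n. h"]) auto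
qed

lemma taylor1d:
  fixes p q w :: "real \<Rightarrow> real"
  assumes d1: "\<And>s. 0 \<le> s \<Longrightarrow> s \<le> 1 \<Longrightarrow> (p has_real_derivative q s) (at s)"
    and d2: "\<And>s. 0 \<le> s \<Longrightarrow> s \<le> 1 \<Longrightarrow> (q has_real_derivative w s) (at s)"
    and E: "\<And>s. 0 \<le> s \<Longrightarrow> s \<le> 1 \<Longrightarrow> \<bar>w s - w 0\<bar> \<le> E"
  shows "p 1 \<ge> p 0 + q 0 + w 0 / 2 - E / 2"
proof -
  define diff where "diff = (\<lambda>m::nat. if m = 0 then p else if m = 1 then q else w)"
  have "\<exists>t. (if (1::real) < 0 then 1 < t \<and> t < 0 else 0 < t \<and> t < 1) \<and>
    p 1 = (\<Sum>m<2. (diff m 0 / fact m) * (1 - 0)^m) + (diff 2 t / fact 2) * (1 - 0)^2"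
    by (rule Taylor[where a=0 and b=1]) (auto simp: diff_def d1 d2 less_2_cases_iff)
  then obtain t where t: "0 < t" "t < 1" "p 1 = p 0 + q 0 + w t / 2"
    by (auto simp: diff_def eval_nat_numeral)
  have "w t \<ge> w 0 - E" using E[of t] t by auto
  then show ?thesis using t by simp
qed

lemma taylor_vec:
  fixes g :: "'a::real_normed_vector \<Rightarrow> real" and gd :: "'a \<Rightarrow> 'a \<Rightarrow> real" and gdd :: "'a \<Rightarrow> 'a \<Rightarrow> real"
  assumes v: "norm v < r"
    and d1: "\<And>y. y \<in> ball x r \<Longrightarrow> (g has_derivative gd y) (at y)"
    and d2: "\<And>y. y \<in> ball x r \<Longrightarrow> ((\<lambda>z. gd z v) has_derivative gdd y) (at y)"
    and E: "\<And>y. y \<in> ball x r \<Longrightarrow> \<bar>gdd y v - gdd x v\<bar> \<le> E"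
  shows "g (x + v) \<ge> g x + gd x v + gdd x v / 2 - E / 2"
proof -
  have inb: "x + s *\<^sub>R v \<in> ball x r" if "0 \<le> s" "s \<le> 1" for s
  proof -
    have "norm (s *\<^sub>R v) = s * norm v" using that by simp
    also have "\<dots> \<le> norm v" using that by (simp add: mult_left_le_one_le)
    finally show ?thesis using v by (simp add: dist_norm)
  qed
  have lin: "(\<lambda>t. h (t *\<^sub>R v)) = (*) (h v)" if "bounded_linear h" for h :: "'a \<Rightarrow> real"
    using that by (intro ext) (simp add: linear_cmul bounded_linear.linear mult.commute)
  have "g (x + 1 *\<^sub>R v) \<ge> g (x + 0 *\<^sub>R v) + gd (x + 0 *\<^sub>R v) v + gdd (x + 0 *\<^sub>R v) v / 2 - E / 2"
  proof (rule taylor1d[where p = "\<lambda>s. g (x + s *\<^sub>R v)" and q = "\<lambda>s. gd (x + s *\<^sub>R v) v"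
        and w = "\<lambda>s. gdd (x + s *\<^sub>R v) v"])
    fix s :: real assume s: "0 \<le> s" "s \<le> 1"
    have inner: "((\<lambda>s. x + s *\<^sub>R v) has_derivative (\<lambda>t. t *\<^sub>R v)) (at s)"
      by (auto intro!: derivative_eq_intros)
    show "((\<lambda>s. g (x + s *\<^sub>R v)) has_real_derivative gd (x + s *\<^sub>R v) v) (at s)"
      unfolding has_field_derivative_def
      using has_derivative_compose[OF inner d1[OF inb[OF s]]]
        lin[OF has_derivative_bounded_linear[OF d1[OF inb[OF s]]]]
      by simp
    show "((\<lambda>s. gd (x + s *\<^sub>R v) v) has_real_derivative gdd (x + s *\<^sub>R v) v) (at s)"
      unfolding has_field_derivative_def
      using has_derivative_compose[OF inner d2[OF inb[OF s]]]
        lin[OF has_derivative_bounded_linear[OF d2[OF inb[OF s]]]]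
      by simp
    show "\<bar>gdd (x + s *\<^sub>R v) v - gdd (x + 0 *\<^sub>R v) v\<bar> \<le> E"
      using E[OF inb[OF s]] by simp
  qed
  then show ?thesis by simp
qed


lemma meas_cont:
  assumes "sets M = sets borel" "continuous_on UNIV g"
  shows "g \<in> borel_measurable M"
  using measurable_cong_sets[OF assms(1) refl, of borel] borel_measurable_continuous_onI[OF assms(2)] by metis

lemma integ_cont:
  fixes g :: "'w::topological_space \<Rightarrow> 'b::{banach,second_countable_topology}"
  assumes "compact (UNIV::'w set)" "sets M = sets borel" "emeasure M (space M) = 1" "continuous_on UNIV g"
  shows "integrable M g"
proof -
  interpret finite_measure M by (rule finite_measureI) (simp add: assms(3))
  have "compact (range g)" using compact_continuous_image[OF assms(4) assms(1)] .
  then obtain B where "\<forall>x\<in>range g. norm x \<le> B" using compact_imp_bounded bounded_iff by metis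
  then show ?thesis by (intro integrable_const_bound[where B=B] meas_cont[OF assms(2,4)]) auto
qed

lemma support_null:
  fixes M :: "'w::topological_space measure"
  assumes reg: "regular_borel_measure M" and Z: "open Z" "Z \<inter> measure_support M = {}"
  shows "emeasure M Z = 0"
proof -
  have sets: "sets M = sets borel" using reg by (simp add: regular_borel_measure_def)
  have Osets: "Z \<in> sets M" using Z sets by simp
  have *: "emeasure M C = 0" if C: "compact C" "C \<subseteq> Z" for C
  proof -
    have "\<forall>w\<in>C. \<exists>U. open U \<and> w \<in> U \<and> emeasure M U = 0"
    proof
      fix w assume "w \<in> C"
      then have "w \<notin> measure_support M" using C Z by auto
      then obtain U where "open U" "w \<in> U" "\<not> emeasure M U > 0" unfolding measure_support_def by auto
      then show "\<exists>U. open U \<and> w \<in> U \<and> emeasure M U = 0" by (intro exI[of _ U]) auto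
    qed
    then obtain U where U: "\<And>w. w \<in> C \<Longrightarrow> open (U w) \<and> w \<in> U w \<and> emeasure M (U w) = 0" by metis
    obtain C' where C': "C' \<subseteq> C" "finite C'" "C \<subseteq> (\<Union>c\<in>C'. U c)"
      using compactE_image[OF C(1), of C U] U by blast
    have "open (\<Union>c\<in>C'. U c)" using C' U by (intro open_UN) auto
    then have "emeasure M C \<le> emeasure M (\<Union>c\<in>C'. U c)"
      using C' U sets by (intro emeasure_mono) auto
    also have "\<dots> \<le> (\<Sum>c\<in>C'. emeasure M (U c))"
      using C' U sets by (intro emeasure_subadditive_finite) auto
    also have "\<dots> = 0" using C' U by (intro sum.neutral) auto
    finally show ?thesis by simp
  qed
  have eq: "emeasure M Z = (SUP C\<in>{C. compact C \<and> C \<subseteq> Z}. emeasure M C)"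
    using reg Osets unfolding regular_borel_measure_def by blast
  have "(SUP C\<in>{C. compact C \<and> C \<subseteq> Z}. emeasure M C) \<le> 0"
    by (rule SUP_least) (simp add: *)
  then show ?thesis by (simp add: eq)
qed

lemma deriv_seq:
  assumes "(g has_derivative g') (at x)" "X \<longlonglongrightarrow> x" "\<And>n. X n \<noteq> x"
  shows "(\<lambda>n. (g (X n) - g x - g' (X n - x)) /\<^sub>R norm (X n - x)) \<longlonglongrightarrow> 0"
proof -
  have l: "((\<lambda>y. (g y - g x - g' (y - x)) /\<^sub>R norm (y - x)) \<longlongrightarrow> 0) (at x)"
    using assms(1) has_derivative_at_within[of g g' x UNIV] by simp
  have "filterlim X (at x) sequentially" using assms(2,3) by (simp add: filterlim_at)
  from filterlim_compose[OF l this] show ?thesis by (simp add: o_def)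
qed

lemma qdiff1:
  fixes A :: "'a::real_inner \<Rightarrow>\<^sub>L 'a"
  shows "\<bar>h \<bullet> A h - u \<bullet> A u\<bar> \<le> norm A * norm (h - u) * (norm h + norm u)"
proof -
  have eq: "h \<bullet> A h - u \<bullet> A u = (h - u) \<bullet> A h + u \<bullet> A (h - u)"
    by (simp add: inner_diff_left inner_diff_right blinfun.diff_right)
  have 1: "\<bar>(h - u) \<bullet> A h\<bar> \<le> norm (h - u) * (norm A * norm h)"
    using Cauchy_Schwarz_ineq2[of "h-u" "A h"] norm_blinfun[of A h] by (meson mult_left_mono norm_ge_zero order_trans)
  have 2: "\<bar>u \<bullet> A (h - u)\<bar> \<le> norm u * (norm A * norm (h - u))"
    using Cauchy_Schwarz_ineq2[of u "A (h-u)"] norm_blinfun[of A "h-u"] by (meson mult_left_mono norm_ge_zero order_trans)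
  have 3: "norm (h - u) * (norm A * norm h) + norm u * (norm A * norm (h - u)) = norm A * norm (h - u) * (norm h + norm u)"
    by (simp add: algebra_simps)
  show ?thesis unfolding eq using 1 2 3 abs_triangle_ineq[of "(h - u) \<bullet> A h" "u \<bullet> A (h - u)"] by linarith
qed

lemma qdiff2:
  fixes D :: "'a::real_normed_vector \<Rightarrow>\<^sub>L ('a \<Rightarrow>\<^sub>L 'y::real_normed_vector)" and l :: "'y \<Rightarrow>\<^sub>L real"
  shows "\<bar>l (D h h) - l (D u u)\<bar> \<le> norm l * norm D * norm (h - u) * (norm h + norm u)"
proof -
  have b: "\<bar>l (D a b)\<bar> \<le> norm l * (norm D * norm a * norm b)" for a b
  proof -
    have "norm (D a b) \<le> norm D * norm a * norm b"
      using norm_blinfun[of "D a" b] norm_blinfun[of D a] by (meson mult_right_mono norm_ge_zero order_trans)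
    then have "norm (l (D a b)) \<le> norm l * (norm D * norm a * norm b)"
      using norm_blinfun[of l "D a b"] by (meson mult_left_mono norm_ge_zero order_trans)
    then show ?thesis by simp
  qed
  have eq: "l (D h h) - l (D u u) = l (D (h - u) h) + l (D u (h - u))"
    by (simp add: blinfun.diff_left blinfun.diff_right)
  have 3: "norm l * (norm D * norm (h - u) * norm h) + norm l * (norm D * norm u * norm (h - u)) = norm l * norm D * norm (h - u) * (norm h + norm u)"
    by (simp add: algebra_simps)
  show ?thesis unfolding eq using b[of "h - u" h] b[of u "h - u"] 3 abs_triangle_ineq[of "l (D (h - u) h)" "l (D u (h - u))"] by linarith
qed

lemma arith_aux:
  fixes I0 J Ifx Fx a Iq lG lDG lD2 lGv c P R :: real
  assumes "I0 \<le> J" "I0 = Ifx + a + Iq / 2 - c" "lG + lDG + lD2 / 2 - P / 2 \<le> lGv"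
    "R = c + P / 2" "Ifx = Fx" "lG = 0" "a + lDG = 0"
  shows "Fx + (Iq + lD2) / 2 - R \<le> J + lGv"
  using assms by (simp add: field_simps)


theorem theorem10:
  fixes A :: "'a::euclidean_space set"
    and K :: "'y::banach set"
    and f :: "'a \<Rightarrow> 'w::t2_space \<Rightarrow> real"
    and fx :: "'a \<Rightarrow> 'w \<Rightarrow> 'a"
    and fxx :: "'a \<Rightarrow> 'w \<Rightarrow> ('a \<Rightarrow>\<^sub>L 'a)"
    and G :: "'a \<Rightarrow> 'y"
    and DG :: "'a \<Rightarrow> ('a \<Rightarrow>\<^sub>L 'y)"
    and D2G :: "'a \<Rightarrow> ('a \<Rightarrow>\<^sub>L ('a \<Rightarrow>\<^sub>L 'y))"
    and N :: "'a set"
    and xs :: 'a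
  assumes A: "A \<noteq> {}" "closed A" "convex A"
    and K: "K \<noteq> {}" "closed K" "convex K" "cone K"
    and W: "compact (UNIV :: 'w set)"
    and f_deriv: "\<And>x \<omega>. ((\<lambda>y. f y \<omega>) has_derivative (\<lambda>h. fx x \<omega> \<bullet> h)) (at x)"
    and f_cont: "continuous_on UNIV (\<lambda>(x, \<omega>). f x \<omega>)"
    and fx_cont: "continuous_on UNIV (\<lambda>(x, \<omega>). fx x \<omega>)"
    and G_deriv: "\<And>x. (G has_derivative blinfun_apply (DG x)) (at x)"
    and DG_cont: "continuous_on UNIV DG"
    and N: "open N" "xs \<in> N"
    and f_deriv2: "\<And>x \<omega>. x \<in> N \<Longrightarrow> ((\<lambda>y. fx y \<omega>) has_derivative blinfun_apply (fxx x \<omega>)) (at x)"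
    and fxx_cont: "continuous_on (N \<times> UNIV) (\<lambda>(x, \<omega>). fxx x \<omega>)"
    and G_deriv2: "\<And>x. x \<in> N \<Longrightarrow> (DG has_derivative blinfun_apply (D2G x)) (at x)"
    and D2G_cont: "continuous_on N D2G"
    and xs_int: "xs \<in> interior A"
    and xs_feas: "xs \<in> feasible_set A K G"
    and Lam_ne: "multipliers A K G f xs \<noteq> {}"
    and SOSC: "\<And>h. h \<in> critical_cone A K G DG f fx xs - {0} \<Longrightarrow>
        \<exists>l \<in> multipliers A K G f xs. \<exists>M \<in> alpha_set A DG f fx xs l.
           lagrangian_hess_form fxx D2G xs l M h > 0"
  shows "(\<exists>U. open U \<and> xs \<in> U \<and> (\<forall>x \<in> U \<inter> feasible_set A K G. maxfun f x \<ge> maxfun f xs)) \<and>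
         (\<exists>\<rho> > 0. \<exists>U. open U \<and> xs \<in> U \<and>
            (\<forall>x \<in> U \<inter> feasible_set A K G. maxfun f x \<ge> maxfun f xs + \<rho> * (norm (x - xs))\<^sup>2))"
proof -
  define F where "F = maxfun f"
  define \<Omega> where "\<Omega> = feasible_set A K G"
  have contA: "\<And>h. h \<in> contingent_cone A xs" using contingent_interior[OF xs_int] .
  have fw: "continuous_on UNIV (f x)" for x
  proof -
    have "continuous_on UNIV (\<lambda>\<omega>::'w. (x, \<omega>))" by (intro continuous_intros)
    from continuous_on_compose2[OF f_cont this] show ?thesis by simp
  qed
  have fxw: "continuous_on UNIV (fx x)" for x
  proof -
    have "continuous_on UNIV (\<lambda>\<omega>::'w. (x, \<omega>))" by (intro continuous_intros)
    from continuous_on_compose2[OF fx_cont this] show ?thesis by simp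
  qed
  have fxxw: "continuous_on UNIV (fxx xs)"
  proof -
    have "continuous_on UNIV (\<lambda>\<omega>::'w. (xs, \<omega>))" by (intro continuous_intros)
    from continuous_on_compose2[OF fxx_cont this] show ?thesis using N(2) by auto
  qed
  have bddF: "bdd_above (range (f x))" for x
    using compact_continuous_image[OF fw W] by (intro bounded_imp_bdd_above compact_imp_bounded)
  have leF: "f x \<omega> \<le> F x" for x \<omega>
    unfolding F_def maxfun_def using bddF by (intro cSup_upper) auto
  have att: "\<exists>\<omega>. f xs \<omega> = F xs"
  proof -
    have "compact (range (f xs))" using compact_continuous_image[OF fw W] .
    then obtain s where s: "s \<in> range (f xs)" "\<forall>t\<in>range (f xs). t \<le> s"
      using compact_attains_sup[of "range (f xs)"] by auto
    then have "F xs = s" unfolding F_def maxfun_def by (intro cSup_eq_maximum) auto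
    then show ?thesis using s by auto
  qed
  have growth: "\<exists>\<rho>>0. \<exists>U. open U \<and> xs \<in> U \<and> (\<forall>x \<in> U \<inter> \<Omega>. F x \<ge> F xs + \<rho> * (norm (x - xs))\<^sup>2)"
  proof (rule ccontr)
    assume neg: "\<not> ?thesis"
    have "\<exists>x. x \<in> ball xs (1 / (real k + 1)) \<and> x \<in> \<Omega> \<and> F x < F xs + (1 / (real k + 1)) * (norm (x - xs))\<^sup>2" for k :: nat
    proof -
      have "1 / (real k + 1) > 0" by simp
      then have "\<not> (\<forall>x \<in> ball xs (1 / (real k + 1)) \<inter> \<Omega>. F x \<ge> F xs + (1 / (real k + 1)) * (norm (x - xs))\<^sup>2)"
        using neg by (metis open_ball centre_in_ball)
      then show ?thesis by (auto simp: not_le)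
    qed
    then obtain x where x: "\<And>k. x k \<in> ball xs (1 / (real k + 1))" "\<And>k. x k \<in> \<Omega>"
      "\<And>k. F (x k) < F xs + (1 / (real k + 1)) * (norm (x k - xs))\<^sup>2" by metis
    have xne: "x k \<noteq> xs" for k using x(3)[of k] by auto
    define t where "t = (\<lambda>k. norm (x k - xs))"
    define u where "u = (\<lambda>k. (1 / t k) *\<^sub>R (x k - xs))"
    have tpos: "t k > 0" for k using xne by (simp add: t_def)
    have tlt: "t k < 1 / (real k + 1)" for k using x(1)[of k] by (simp add: t_def dist_norm norm_minus_commute)
    have inv0: "(\<lambda>k. 1 / (real k + 1)) \<longlonglongrightarrow> 0"
      using LIMSEQ_inverse_real_of_nat by (simp add: inverse_eq_divide add.commute)
    have "\<forall>k. norm (t k) \<le> 1 / (real k + 1)" using tlt tpos by (simp add: abs_of_pos less_imp_le)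
    then have t0: "t \<longlonglongrightarrow> 0"
      by (intro Lim_null_comparison[OF _ inv0] always_eventually)
    have unorm: "norm (u k) = 1" for k using tpos[of k] by (simp add: u_def t_def)
    have xeq: "x k = xs + t k *\<^sub>R u k" for k using tpos[of k] by (simp add: u_def)
    have "seq_compact (sphere (0::'a) 1)" by (intro compact_imp_seq_compact compact_sphere)
    then obtain h r1 where h: "h \<in> sphere 0 1" "strict_mono r1" "(u \<circ> r1) \<longlonglongrightarrow> h"
      unfolding seq_compact_def using unorm by (metis mem_sphere_0)
    obtain r2 where r2: "strict_mono r2" "monoseq (\<lambda>n. (t \<circ> r1) (r2 n))" using seq_monosub by blast
    define r where "r = r1 \<circ> r2"
    have r: "strict_mono r" using h(2) r2(1) by (simp add: r_def strict_mono_o)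
    define X where "X = (\<lambda>n. x (r n))"
    define T where "T = (\<lambda>n. t (r n))"
    define Uu where "Uu = (\<lambda>n. u (r n))"
    define E where "E = (\<lambda>n. 1 / (real (r n) + 1))"
    have T0: "T \<longlonglongrightarrow> 0" using LIMSEQ_subseq_LIMSEQ[OF t0 r] by (simp add: T_def o_def)
    have E0: "E \<longlonglongrightarrow> 0" using LIMSEQ_subseq_LIMSEQ[OF inv0 r] by (simp add: E_def o_def)
    have Uh: "Uu \<longlonglongrightarrow> h" using LIMSEQ_subseq_LIMSEQ[OF h(3) r2(1)] by (simp add: Uu_def r_def o_def)
    have Tpos: "T n > 0" for n by (simp add: T_def tpos)
    have Epos: "E n > 0" for n by (simp add: E_def)
    have Unorm: "norm (Uu n) = 1" for n by (simp add: Uu_def unorm)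
    have Xeq: "X n = xs + T n *\<^sub>R Uu n" for n by (simp add: X_def T_def Uu_def xeq)
    have XO: "X n \<in> \<Omega>" for n by (simp add: X_def x(2))
    have FX: "F (X n) < F xs + E n * (T n)\<^sup>2" for n using x(3)[of "r n"] by (simp add: X_def E_def T_def t_def)
    have Xne: "X n \<noteq> xs" for n by (simp add: X_def xne)
    have XL: "X \<longlonglongrightarrow> xs"
    proof -
      have "(\<lambda>n. xs + T n *\<^sub>R Uu n) \<longlonglongrightarrow> xs + 0 *\<^sub>R h" using T0 Uh by (intro tendsto_intros)
      then show ?thesis by (simp add: Xeq[abs_def])
    qed
    have Tdec: "decseq T"
    proof -
      have "monoseq T" using r2(2) by (simp add: T_def r_def o_def)
      then consider "incseq T" | "decseq T" unfolding monoseq_iff by blast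
      then show ?thesis
      proof cases
        case 1
        then have "T 0 \<le> 0" using T0 by (intro LIMSEQ_le_const[OF T0]) (auto simp: incseq_def)
        then show ?thesis using Tpos[of 0] by simp
      qed
    qed
    have hnorm: "norm h = 1" using h(1) by simp
    then have hnz: "h \<noteq> 0" by auto
    have C1: "DG xs h \<in> contingent_cone K (G xs)"
    proof -
      define hn where "hn = (\<lambda>n. (1 / T n) *\<^sub>R (G (X n) - G xs))"
      have a: "(\<lambda>n. (G (X n) - G xs - DG xs (X n - xs)) /\<^sub>R norm (X n - xs)) \<longlonglongrightarrow> 0"
        by (rule deriv_seq[OF G_deriv XL Xne])
      have b: "(G (X n) - G xs - DG xs (X n - xs)) /\<^sub>R norm (X n - xs) = hn n - DG xs (Uu n)" for n
        using Tpos[of n] Unorm[of n]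
        by (simp add: hn_def Xeq blinfun.scaleR_right scaleR_diff_right divide_inverse_commute)
      have c: "(\<lambda>n. DG xs (Uu n)) \<longlonglongrightarrow> DG xs h" using Uh by (intro blinfun.tendsto tendsto_const)
      have "(\<lambda>n. (hn n - DG xs (Uu n)) + DG xs (Uu n)) \<longlonglongrightarrow> 0 + DG xs h"
        using a c unfolding b by (intro tendsto_add)
      then have hnl: "hn \<longlonglongrightarrow> DG xs h" by simp
      have "G xs + T n *\<^sub>R hn n = G (X n)" for n using Tpos[of n] by (simp add: hn_def)
      then have "G xs + T n *\<^sub>R hn n \<in> K" for n using XO[of n] by (simp add: \<Omega>_def feasible_set_def)
      then show ?thesis unfolding contingent_cone_def using Tpos Tdec T0 hnl by blast
    qed
    have C2: "Sup ((\<lambda>\<omega>. fx xs \<omega> \<bullet> h) ` active_set f xs) \<le> 0"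
    proof (rule cSup_least)
      show "(\<lambda>\<omega>. fx xs \<omega> \<bullet> h) ` active_set f xs \<noteq> {}" using att by (auto simp: active_set_def F_def)
      fix y assume "y \<in> (\<lambda>\<omega>. fx xs \<omega> \<bullet> h) ` active_set f xs"
      then obtain \<omega> where \<omega>: "f xs \<omega> = F xs" "y = fx xs \<omega> \<bullet> h" by (auto simp: active_set_def F_def)
      define a where "a = (\<lambda>n. (f (X n) \<omega> - f xs \<omega> - fx xs \<omega> \<bullet> (X n - xs)) /\<^sub>R norm (X n - xs))"
      have a0: "a \<longlonglongrightarrow> 0" unfolding a_def using deriv_seq[OF f_deriv XL Xne] by simp
      have le: "fx xs \<omega> \<bullet> Uu n \<le> E n * T n - a n" for n
      proof -
        have eq: "a n = (f (X n) \<omega> - f xs \<omega>) / T n - fx xs \<omega> \<bullet> Uu n"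
          using Tpos[of n] Unorm[of n] by (simp add: a_def Xeq inner_scaleR_right field_simps)
        have "f (X n) \<omega> - f xs \<omega> \<le> F (X n) - F xs" using leF[of "X n" \<omega>] \<omega>(1) by simp
        also have "\<dots> < E n * (T n)\<^sup>2" using FX[of n] by simp
        finally have "(f (X n) \<omega> - f xs \<omega>) / T n < E n * T n"
          using Tpos[of n] by (simp add: divide_less_eq power2_eq_square mult.assoc)
        then show ?thesis using eq by simp
      qed
      have l1: "(\<lambda>n. fx xs \<omega> \<bullet> Uu n) \<longlonglongrightarrow> fx xs \<omega> \<bullet> h" using Uh by (intro tendsto_intros)
      have l2: "(\<lambda>n. E n * T n - a n) \<longlonglongrightarrow> 0 * 0 - 0" using E0 T0 a0 by (intro tendsto_intros)
      have "fx xs \<omega> \<bullet> h \<le> 0 * 0 - 0" using LIMSEQ_le[OF l1 l2] le by blast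
      then show "y \<le> 0" using \<omega>(2) by simp
    qed
    have hcrit: "h \<in> critical_cone A K G DG f fx xs - {0}"
      using contA C1 C2 hnz unfolding critical_cone_def by auto
    obtain l M where lM: "l \<in> multipliers A K G f xs" "M \<in> alpha_set A DG f fx xs l"
      "lagrangian_hess_form fxx D2G xs l M h > 0" using SOSC[OF hcrit] by blast
    define Q where "Q = lagrangian_hess_form fxx D2G xs l M"
    define q where "q = Q h"
    have qpos: "q > 0" using lM(3) by (simp add: q_def Q_def)
    have lK: "\<And>y. y \<in> K \<Longrightarrow> l y \<le> 0" using lM(1) by (auto simp: multipliers_def polar_cone_def)
    have lG: "l (G xs) = 0" using lM(1) by (simp add: multipliers_def)
    have Mreg: "regular_borel_measure M" and Msupp: "measure_support M \<subseteq> active_set f xs"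
      and M1: "emeasure M (space M) = 1"
      and Mfo: "\<And>v. (LINT \<omega>|M. fx xs \<omega>) \<bullet> v + l (DG xs v) \<ge> 0"
      using lM(2) contA by (auto simp: alpha_set_def)
    have Msets: "sets M = sets borel" using Mreg by (simp add: regular_borel_measure_def)
    interpret finite_measure M by (rule finite_measureI) (simp add: M1)
    have meas1: "measure M (space M) = 1" using M1 by (simp add: measure_def)
    have intf: "integrable M (f x)" for x by (rule integ_cont[OF W Msets M1 fw])
    have intfx: "integrable M (fx xs)" by (rule integ_cont[OF W Msets M1 fxw])
    have qw: "continuous_on UNIV (\<lambda>\<omega>. v \<bullet> fxx xs \<omega> v)" for v
      by (intro continuous_intros blinfun.continuous_on fxxw)
    have intq: "integrable M (\<lambda>\<omega>. v \<bullet> fxx xs \<omega> v)" for v by (rule integ_cont[OF W Msets M1 qw])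
    obtain Bf where Bf: "\<And>\<omega>. norm (fxx xs \<omega>) \<le> Bf"
      using compact_imp_bounded[OF compact_continuous_image[OF fxxw W]] unfolding bounded_iff by auto
    have D0: "(LINT \<omega>|M. fx xs \<omega>) \<bullet> v + l (DG xs v) = 0" for v
      using Mfo[of v] Mfo[of "-v"] by (simp add: blinfun.minus_right)
    have AEact: "AE \<omega> in M. f xs \<omega> = F xs"
    proof -
      define Z where "Z = f xs -` (- {F xs})"
      have "open (f xs -` (- {F xs}) \<inter> UNIV)"
        using fw[of xs] continuous_on_open_vimage[OF open_UNIV] by (metis closed_singleton open_Compl)
      then have Zo: "open Z" by (simp add: Z_def)
      have "Z \<inter> measure_support M = {}" using Msupp by (auto simp: Z_def active_set_def F_def)
      then have "emeasure M Z = 0" by (rule support_null[OF Mreg Zo])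
      moreover have "Z \<in> sets M" using Zo Msets by simp
      ultimately have "Z \<in> null_sets M" by (rule null_setsI)
      then show ?thesis by (rule AE_I') (auto simp: Z_def)
    qed
    have PhiF: "(LINT \<omega>|M. f xs \<omega>) = F xs"
    proof -
      have "(LINT \<omega>|M. f xs \<omega>) = (LINT \<omega>|M. F xs)"
        by (rule integral_cong_AE) (auto simp: AEact intro: borel_measurable_integrable intf)
      also have "\<dots> = F xs" using meas1 by simp
      finally show ?thesis .
    qed
    have PhiX: "(LINT \<omega>|M. f x \<omega>) \<le> F x" for x
    proof -
      have "(LINT \<omega>|M. f x \<omega>) \<le> (LINT \<omega>|M. F x)" by (rule integral_mono[OF intf integrable_const]) (rule leF)
      also have "\<dots> = F x" using meas1 by simp
      finally show ?thesis .
    qed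
    define eps where "eps = q / (8 * (1 + norm l))"
    have l1: "1 + norm l > 0" by (simp add: add_pos_nonneg)
    have eps: "eps > 0" using qpos l1 by (simp add: eps_def)
    have gen8: "\<And>c::real. c > 0 \<Longrightarrow> c * (q / (8 * c)) = q / 8" by (simp add: divide_simps)
    have epsl: "(1 + norm l) * eps = q / 8" unfolding eps_def using gen8[OF l1] .
    obtain \<delta> where \<delta>: "\<delta> > 0" "ball xs \<delta> \<subseteq> N"
        "\<And>y \<omega>. y \<in> ball xs \<delta> \<Longrightarrow> norm (fxx y \<omega> - fxx xs \<omega>) \<le> eps"
        "\<And>y. y \<in> ball xs \<delta> \<Longrightarrow> norm (D2G y - D2G xs) \<le> eps"
    proof -
      define W0 where "W0 = (\<lambda>p. fxx (fst p) (snd p) - fxx xs (snd p)) -` ball 0 eps \<inter> (N \<times> UNIV)"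
      have cW: "continuous_on (N \<times> UNIV) (\<lambda>p. fxx (fst p) (snd p) - fxx xs (snd p))"
      proof -
        have 1: "continuous_on (N \<times> UNIV) (\<lambda>p. fxx (fst p) (snd p))"
          using fxx_cont by (simp add: case_prod_unfold)
        have "continuous_on (N \<times> (UNIV::'w set)) snd" by (intro continuous_intros)
        from continuous_on_compose2[OF fxxw this]
        have 2: "continuous_on (N \<times> UNIV) (\<lambda>p. fxx xs (snd p))" by simp
        from continuous_on_diff[OF 1 2] show ?thesis .
      qed
      have oW: "open W0"
        using cW open_ball[of 0 eps] unfolding continuous_on_open_vimage[OF open_Times[OF N(1) open_UNIV]] W0_def
        by blast
      have "{xs} \<times> UNIV \<subseteq> W0" using N(2) eps by (auto simp: W0_def)
      then obtain X0 where X0: "xs \<in> X0" "open X0" "X0 \<times> UNIV \<subseteq> W0" using Elementary_Topology.tube_lemma[OF W oW] by blast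
      have "open (X0 \<inter> N)" "xs \<in> X0 \<inter> N" using X0 N by auto
      then obtain d1 where d1: "d1 > 0" "ball xs d1 \<subseteq> X0 \<inter> N" by (meson openE)
      obtain d2 where d2: "d2 > 0" "\<And>y. y \<in> N \<Longrightarrow> dist y xs < d2 \<Longrightarrow> dist (D2G y) (D2G xs) < eps"
        using D2G_cont N(2) eps unfolding continuous_on_iff by blast
      show ?thesis
      proof (rule that[of "min d1 d2"])
        show "min d1 d2 > 0" using d1 d2 by simp
        show "ball xs (min d1 d2) \<subseteq> N" using d1 by auto
      next
        fix y \<omega> assume y: "y \<in> ball xs (min d1 d2)"
        then have "y \<in> X0" using d1 by auto
        then have "(y, \<omega>::'w) \<in> X0 \<times> UNIV" by simp
        then have "(y, \<omega>) \<in> W0" using X0(3) by blast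
        then show "norm (fxx y \<omega> - fxx xs \<omega>) \<le> eps" by (simp add: W0_def dist_norm less_imp_le norm_minus_commute)
      next
        fix y assume y: "y \<in> ball xs (min d1 d2)"
        then have "y \<in> N" "dist y xs < d2" using d1 by (auto simp: dist_commute)
        then show "norm (D2G y - D2G xs) \<le> eps" using d2(2) by (simp add: dist_norm less_imp_le)
      qed
    qed
    have tayf: "f (xs + v) \<omega> \<ge> f xs \<omega> + fx xs \<omega> \<bullet> v + (v \<bullet> fxx xs \<omega> v) / 2 - eps * (norm v)\<^sup>2 / 2"
      if v: "norm v < \<delta>" for v \<omega>
    proof -
      have "f (xs + v) \<omega> \<ge> f xs \<omega> + fx xs \<omega> \<bullet> v + (fxx xs \<omega> v \<bullet> v) / 2 - eps * (norm v)\<^sup>2 / 2"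
      proof (rule taylor_vec[where g="\<lambda>y. f y \<omega>" and gd="\<lambda>y w. fx y \<omega> \<bullet> w" and gdd="\<lambda>y w. fxx y \<omega> w \<bullet> v", OF v])
        fix y assume y: "y \<in> ball xs \<delta>"
        show "((\<lambda>y. f y \<omega>) has_derivative (\<lambda>w. fx y \<omega> \<bullet> w)) (at y)" using f_deriv by simp
        have yN: "y \<in> N" using y \<delta>(2) by auto
        show "((\<lambda>z. fx z \<omega> \<bullet> v) has_derivative (\<lambda>w. fxx y \<omega> w \<bullet> v)) (at y)"
          using has_derivative_inner_left[OF f_deriv2[OF yN]] by simp
        have "\<bar>fxx y \<omega> v \<bullet> v - fxx xs \<omega> v \<bullet> v\<bar> = \<bar>(fxx y \<omega> - fxx xs \<omega>) v \<bullet> v\<bar>"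
          by (simp add: blinfun.diff_left inner_diff_left)
        also have "\<dots> \<le> norm ((fxx y \<omega> - fxx xs \<omega>) v) * norm v" by (rule Cauchy_Schwarz_ineq2)
        also have "\<dots> \<le> (norm (fxx y \<omega> - fxx xs \<omega>) * norm v) * norm v" by (intro mult_right_mono norm_blinfun) auto
        also have "\<dots> \<le> (eps * norm v) * norm v" using \<delta>(3)[OF y] by (intro mult_right_mono) auto
        finally show "\<bar>fxx y \<omega> v \<bullet> v - fxx xs \<omega> v \<bullet> v\<bar> \<le> eps * (norm v)\<^sup>2"
          by (simp add: power2_eq_square mult.assoc)
      qed
      then show ?thesis by (simp add: inner_commute)
    qed
    have tayG: "l (G (xs + v)) \<ge> l (G xs) + l (DG xs v) + l (D2G xs v v) / 2 - norm l * eps * (norm v)\<^sup>2 / 2"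
      if v: "norm v < \<delta>" for v
    proof (rule taylor_vec[where g="\<lambda>y. l (G y)" and gd="\<lambda>y w. l (DG y w)" and gdd="\<lambda>y w. l (D2G y w v)", OF v])
      fix y assume y: "y \<in> ball xs \<delta>"
      have yN: "y \<in> N" using y \<delta>(2) by auto
      show "((\<lambda>y. l (G y)) has_derivative (\<lambda>w. l (DG y w))) (at y)"
        by (rule bounded_linear.has_derivative[OF blinfun.bounded_linear_right G_deriv])
      have "((\<lambda>z. DG z v) has_derivative (\<lambda>w. D2G y w v)) (at y)"
        by (rule bounded_linear.has_derivative[OF blinfun.bounded_linear_left G_deriv2[OF yN]])
      then show "((\<lambda>z. l (DG z v)) has_derivative (\<lambda>w. l (D2G y w v))) (at y)"
        by (rule bounded_linear.has_derivative[OF blinfun.bounded_linear_right])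
      have "\<bar>l (D2G y v v) - l (D2G xs v v)\<bar> = \<bar>l ((D2G y - D2G xs) v v)\<bar>"
        by (simp add: blinfun.diff_left blinfun.diff_right)
      also have "\<dots> \<le> norm l * norm ((D2G y - D2G xs) v v)" using norm_blinfun[of l] by simp
      also have "\<dots> \<le> norm l * (norm (D2G y - D2G xs) * norm v * norm v)"
      proof (rule mult_left_mono)
        have "norm ((D2G y - D2G xs) v v) \<le> norm ((D2G y - D2G xs) v) * norm v" by (rule norm_blinfun)
        also have "\<dots> \<le> (norm (D2G y - D2G xs) * norm v) * norm v" by (intro mult_right_mono norm_blinfun) auto
        finally show "norm ((D2G y - D2G xs) v v) \<le> norm (D2G y - D2G xs) * norm v * norm v" .
      qed simp
      also have "\<dots> \<le> norm l * (eps * norm v * norm v)"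
        using \<delta>(4)[OF y] by (intro mult_left_mono mult_right_mono) auto
      finally show "\<bar>l (D2G y v v) - l (D2G xs v v)\<bar> \<le> norm l * eps * (norm v)\<^sup>2"
        by (simp add: power2_eq_square mult.assoc)
    qed
    have tayPhi: "(LINT \<omega>|M. f (xs + v) \<omega>) + l (G (xs + v)) \<ge> F xs + Q v / 2 - (1 + norm l) * eps * (norm v)\<^sup>2 / 2"
      if v: "norm v < \<delta>" for v
    proof -
      define c where "c = eps * (norm v)\<^sup>2 / 2"
      have i1: "integrable M (\<lambda>\<omega>. f xs \<omega> + fx xs \<omega> \<bullet> v + (v \<bullet> fxx xs \<omega> v) / 2 - c)"
        using intf[of xs] intfx intq[of v] by auto
      have "(LINT \<omega>|M. f xs \<omega> + fx xs \<omega> \<bullet> v + (v \<bullet> fxx xs \<omega> v) / 2 - c) \<le> (LINT \<omega>|M. f (xs + v) \<omega>)"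
        using tayf[OF v] by (intro integral_mono[OF i1 intf]) (auto simp: c_def)
      moreover have "(LINT \<omega>|M. f xs \<omega> + fx xs \<omega> \<bullet> v + (v \<bullet> fxx xs \<omega> v) / 2 - c)
          = (LINT \<omega>|M. f xs \<omega>) + (LINT \<omega>|M. fx xs \<omega>) \<bullet> v + (LINT \<omega>|M. v \<bullet> fxx xs \<omega> v) / 2 - c"
        using intf intfx intq meas1 by (simp add: integrable_inner_left)
      moreover note tayG[OF v]
      moreover have "(1 + norm l) * eps * (norm v)\<^sup>2 / 2 = c + norm l * eps * (norm v)\<^sup>2 / 2"
        by (simp add: c_def algebra_simps)
      ultimately show ?thesis using PhiF lG D0[of v]
        unfolding Q_def lagrangian_hess_form_def by (rule arith_aux)
    qed
    have Qhom: "Q (s *\<^sub>R w) = s\<^sup>2 * Q w" for s w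
      by (simp add: Q_def lagrangian_hess_form_def blinfun.scaleR_right blinfun.scaleR_left power2_eq_square algebra_simps)
    define C where "C = 2 * (Bf + norm l * norm (D2G xs))"
    have Bf0: "Bf \<ge> 0" using Bf[of undefined] norm_ge_zero order_trans by blast
    have Qcont: "Q h \<le> Q w + C * norm (h - w)" if w: "norm w = 1" for w
    proof -
      have "(LINT \<omega>|M. h \<bullet> fxx xs \<omega> h) - (LINT \<omega>|M. w \<bullet> fxx xs \<omega> w) = (LINT \<omega>|M. h \<bullet> fxx xs \<omega> h - w \<bullet> fxx xs \<omega> w)"
        using intq by simp
      also have "\<dots> \<le> (LINT \<omega>|M. 2 * Bf * norm (h - w))"
      proof (rule integral_mono)
        show "integrable M (\<lambda>\<omega>. h \<bullet> fxx xs \<omega> h - w \<bullet> fxx xs \<omega> w)" using intq by auto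
        show "integrable M (\<lambda>\<omega>. 2 * Bf * norm (h - w))" by simp
        fix \<omega>
        have "h \<bullet> fxx xs \<omega> h - w \<bullet> fxx xs \<omega> w \<le> norm (fxx xs \<omega>) * norm (h - w) * (norm h + norm w)"
          using qdiff1[of h "fxx xs \<omega>" w] by simp
        also have "\<dots> \<le> Bf * norm (h - w) * 2" using hnorm w Bf[of \<omega>] by (simp add: mult_right_mono)
        finally show "h \<bullet> fxx xs \<omega> h - w \<bullet> fxx xs \<omega> w \<le> 2 * Bf * norm (h - w)" by simp
      qed
      also have "\<dots> = 2 * Bf * norm (h - w)" using meas1 by simp
      finally have 1: "(LINT \<omega>|M. h \<bullet> fxx xs \<omega> h) - (LINT \<omega>|M. w \<bullet> fxx xs \<omega> w) \<le> 2 * Bf * norm (h - w)" .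
      have 2: "l (D2G xs h h) - l (D2G xs w w) \<le> norm l * norm (D2G xs) * norm (h - w) * 2"
        using qdiff2[of l "D2G xs" h w] hnorm w by simp
      show ?thesis using 1 2 by (simp add: Q_def lagrangian_hess_form_def C_def algebra_simps)
    qed
    have ev: "eventually (\<lambda>n. T n < \<delta> \<and> E n < q / 8 \<and> C * norm (Uu n - h) < q / 8) sequentially"
    proof -
      have "(\<lambda>n. C * norm (Uu n - h)) \<longlonglongrightarrow> C * norm (h - h)" using Uh by (intro tendsto_intros)
      then have 3: "eventually (\<lambda>n. C * norm (Uu n - h) < q / 8) sequentially"
        using qpos by (intro order_tendstoD(2)) auto
      have 1: "eventually (\<lambda>n. T n < \<delta>) sequentially" using T0 \<delta>(1) by (rule order_tendstoD(2))
      have 2: "eventually (\<lambda>n. E n < q / 8) sequentially" using E0 qpos by (intro order_tendstoD(2)) auto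
      show ?thesis using 1 2 3 by (intro eventually_conj)
    qed
    then obtain n where n: "T n < \<delta>" "E n < q / 8" "C * norm (Uu n - h) < q / 8"
      unfolding eventually_sequentially by auto
    define v where "v = T n *\<^sub>R Uu n"
    have nv: "norm v = T n" using Tpos[of n] Unorm[of n] by (simp add: v_def)
    have Xv: "X n = xs + v" by (simp add: v_def Xeq)
    have GK: "G (X n) \<in> K" using XO[of n] by (simp add: \<Omega>_def feasible_set_def)
    have A0: "(LINT \<omega>|M. f (X n) \<omega>) + l (G (X n)) \<le> F (X n)"
      using PhiX[of "X n"] lK[OF GK] by simp
    have A1: "F xs + (T n)\<^sup>2 * Q (Uu n) / 2 - q / 16 * (T n)\<^sup>2 \<le> F (X n)"
    proof -
      have "F xs + Q v / 2 - (1 + norm l) * eps * (norm v)\<^sup>2 / 2 \<le> F (X n)"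
        using tayPhi[of v] n(1) nv A0 Xv by simp
      then show ?thesis using epsl nv by (simp add: v_def Qhom)
    qed
    have "(T n)\<^sup>2 * Q (Uu n) / 2 - q / 16 * (T n)\<^sup>2 < E n * (T n)\<^sup>2" using A1 FX[of n] by linarith
    then have "(T n)\<^sup>2 * (Q (Uu n) / 2 - q / 16) < (T n)\<^sup>2 * E n" by (simp add: algebra_simps)
    then have "Q (Uu n) / 2 - q / 16 < E n" using Tpos[of n] by (simp add: mult_less_cancel_left_pos)
    then have "Q (Uu n) < 3 * q / 8" using n(2) by linarith
    moreover have "q \<le> Q (Uu n) + C * norm (Uu n - h)" using Qcont[OF Unorm[of n]] by (simp add: q_def norm_minus_commute)
    ultimately show False using n(3) qpos by linarith
  qed
  show ?thesis
  proof
    show "\<exists>\<rho>>0. \<exists>U. open U \<and> xs \<in> U \<and> (\<forall>x \<in> U \<inter> feasible_set A K G. maxfun f x \<ge> maxfun f xs + \<rho> * (norm (x - xs))\<^sup>2)"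
      using growth unfolding F_def \<Omega>_def .
    from growth obtain \<rho> U where "\<rho> > 0" "open U" "xs \<in> U" "\<forall>x \<in> U \<inter> \<Omega>. F x \<ge> F xs + \<rho> * (norm (x - xs))\<^sup>2"
      by blast
    moreover have "\<rho> * (norm (x - xs))\<^sup>2 \<ge> 0" for x using \<open>\<rho> > 0\<close> by simp
    ultimately show "\<exists>U. open U \<and> xs \<in> U \<and> (\<forall>x \<in> U \<inter> feasible_set A K G. maxfun f x \<ge> maxfun f xs)"
      unfolding F_def \<Omega>_def by (metis add_increasing2 order_refl add.commute add_le_cancel_left order_trans le_add_same_cancel1)
  qed
qed

end
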